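(* Let $A\in\mathbb{R}^{n\times n}$ and $C_i\in\mathbb{R}^{s_i\times n}$, $i\in\{1,\dots,m\}$, be such that $(C,A)$ is observable, where $C=\begin{bmatrix}C_1^\top&\cdots&C_m^\top\end{bmatrix}^\top$, and suppose the neighbor graph $\mathbb{N}$ is strongly connected. Let $\tilde A=I_m\otimes A$, $B_i=b_i\otimes I_n$ ($b_i$ the $i$-th unit vector of $\mathbb{R}^m$), $C_{ii}=C_iB_i^\top$, and $C_{ij}=c_{ij}\otimes I_n$ for $j\in\mathcal{N}_i$, $j\neq i$, where $c_{ij}\in\mathbb{R}^{1\times m}$ has entry $-1$ in position $i$, $+1$ in position $j$ and zeros elsewhere. Then the multi-channel system $$\dot\epsilon=\tilde A\epsilon+\sum_{i=1}^m\sum_{j\in\mathcal{N}_i}B_iu_{ij},\qquad y_{ij}=C_{ij}\epsilon,\quad ij\in\mathcal{I}=\{ij:i\in\{1,\dots,m\},\ j\in\mathcal{N}_i\},$$ in which channel $ij$ has input matrix $B_i$ and output matrix $C_{ij}$, is jointly controllable and jointly observable.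
   Context: Agents $1,\dots,m$ have neighbor sets $\mathcal{N}_i\ni i$; the neighbor graph $\mathbb{N}$ is the directed graph on $\{1,\dots,m\}$ with an arc from $j$ to $i$ whenever $j\in\mathcal{N}_i$, $j\neq i$, and $c_{ij}$ is the row of the transpose of its incidence matrix corresponding to that arc. A multi-channel system is jointly controllable (resp. jointly observable) if the pair consisting of $\tilde A$ and the block row of all input matrices is controllable (resp. the block column of all output matrices together with $\tilde A$ is observable). *)

theory Defs
  imports "Jordan_Normal_Form.DL_Rank"
begin

definition kron :: "'a::times mat \<Rightarrow> 'a mat \<Rightarrow> 'a mat" where
  "kron P Q = mat (dim_row P * dim_row Q) (dim_col P * dim_col Q)
     (\<lambda>(i,j). P $$ (i div dim_row Q, j div dim_col Q) * Q $$ (i mod dim_row Q, j mod dim_col Q))"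

definition hcat :: "nat \<Rightarrow> 'a mat list \<Rightarrow> 'a mat" where
  "hcat r Ms = mat_of_cols r (concat (map cols Ms))"

definition vcat :: "nat \<Rightarrow> 'a mat list \<Rightarrow> 'a mat" where
  "vcat c Ms = mat_of_rows c (concat (map rows Ms))"

definition controllable :: "real mat \<Rightarrow> real mat \<Rightarrow> bool" where
  "controllable A B \<longleftrightarrow>
     (let N = dim_row A;
          K = hcat N (map (\<lambda>k. (A ^\<^sub>m k) * B) [0..<N])
      in vec_space.rank N K = N)"

definition observable :: "real mat \<Rightarrow> real mat \<Rightarrow> bool" where
  "observable C A \<longleftrightarrow>
     (let N = dim_col A;
          Ob = vcat N (map (\<lambda>k. C * (A ^\<^sub>m k)) [0..<N])
      in vec_space.rank (dim_row Ob) Ob = N)"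

(* agents are 0,...,m-1; neighbor sets Nb i; arc j -> i iff j in Nb i, j ~= i *)
definition nbr_arcs :: "nat \<Rightarrow> (nat \<Rightarrow> nat set) \<Rightarrow> (nat \<times> nat) set" where
  "nbr_arcs m Nb = {(j, i). i < m \<and> j \<in> Nb i \<and> j \<noteq> i}"

definition strongly_connected_nbr :: "nat \<Rightarrow> (nat \<Rightarrow> nat set) \<Rightarrow> bool" where
  "strongly_connected_nbr m Nb \<longleftrightarrow> (\<forall>i<m. \<forall>j<m. (i, j) \<in> (nbr_arcs m Nb)\<^sup>*)"

definition channels :: "nat \<Rightarrow> (nat \<Rightarrow> nat set) \<Rightarrow> (nat \<times> nat) list" where
  "channels m Nb = concat (map (\<lambda>i. map (\<lambda>j. (i, j)) (sorted_list_of_set (Nb i))) [0..<m])"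

definition unit_col :: "nat \<Rightarrow> nat \<Rightarrow> real mat" where
  "unit_col m i = mat m 1 (\<lambda>(r, _). if r = i then 1 else 0)"

definition inc_row :: "nat \<Rightarrow> nat \<Rightarrow> nat \<Rightarrow> real mat" where
  "inc_row m i j = mat 1 m (\<lambda>(_, k). if k = i then -1 else if k = j then 1 else 0)"

definition Atil :: "nat \<Rightarrow> real mat \<Rightarrow> real mat" where
  "Atil m A = kron (1\<^sub>m m) A"

definition Bmat :: "nat \<Rightarrow> nat \<Rightarrow> nat \<Rightarrow> real mat" where
  "Bmat m n i = kron (unit_col m i) (1\<^sub>m n)"

definition Cmat :: "nat \<Rightarrow> nat \<Rightarrow> (nat \<Rightarrow> real mat) \<Rightarrow> nat \<Rightarrow> nat \<Rightarrow> real mat" where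
  "Cmat m n C i j = (if j = i then C i * transpose_mat (Bmat m n i) else kron (inc_row m i j) (1\<^sub>m n))"

definition jointly_controllable :: "nat \<Rightarrow> nat \<Rightarrow> (nat \<Rightarrow> nat set) \<Rightarrow> real mat \<Rightarrow> bool" where
  "jointly_controllable m n Nb A \<longleftrightarrow>
     controllable (Atil m A) (hcat (m * n) (map (\<lambda>(i, j). Bmat m n i) (channels m Nb)))"

definition jointly_observable :: "nat \<Rightarrow> nat \<Rightarrow> (nat \<Rightarrow> nat set) \<Rightarrow> (nat \<Rightarrow> real mat) \<Rightarrow> real mat \<Rightarrow> bool" where
  "jointly_observable m n Nb C A \<longleftrightarrow>
     observable (vcat (m * n) (map (\<lambda>(i, j). Cmat m n C i j) (channels m Nb))) (Atil m A)"

end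

theory Submission
  imports Defs
begin


lemma mult_unit_vec_col:
  fixes M :: "'a::field mat"
  assumes "M \<in> carrier_mat r c" "i < c"
  shows "M *\<^sub>v unit_vec c i = col M i"
  using assms by (intro eq_vecI) (auto simp: scalar_prod_right_unit)

context vec_space begin

lemma rank_full_kernel:
  assumes M: "M \<in> carrier_mat n c" and r: "rank M = c"
    and x: "x \<in> carrier_vec c" and Mx: "M *\<^sub>v x = 0\<^sub>v n"
  shows "x = 0\<^sub>v c"
proof -
  have dist: "distinct (cols M)"
  proof (rule ccontr)
    assume nd: "\<not> distinct (cols M)"
    obtain S where S: "maximal S (\<lambda>T. T \<subseteq> set (cols M) \<and> lin_indpt T)"
      using maximal_exists[of "(\<lambda>T. T \<subseteq> set (cols M) \<and> lin_indpt T)" "card (set (cols M))" "{}"]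
      by (meson List.finite_set card_mono empty_iff empty_subsetI finite_lin_indpt2 rev_finite_subset)
    then have "card S \<le> card (set (cols M))" by (simp add: card_mono maximal_def)
    moreover have "card (set (cols M)) < c"
      using nd M card_distinct[of "cols M"] card_length[of "cols M"] by fastforce
    ultimately show False using rank_card_indpt[OF M S] r by simp
  qed
  have li: "lin_indpt (set (cols M))" using full_rank_lin_indpt[OF M r dist] .
  show ?thesis
  proof (rule ccontr)
    assume "x \<noteq> 0\<^sub>v c"
    from lin_depI[OF M x this Mx dist] li show False by simp
  qed
qed

lemma kernel_full_rank:
  assumes M: "M \<in> carrier_mat n c"
    and K: "\<And>x. x \<in> carrier_vec c \<Longrightarrow> M *\<^sub>v x = 0\<^sub>v n \<Longrightarrow> x = 0\<^sub>v c"
  shows "rank M = c"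
proof -
  have dist: "distinct (cols M)"
  proof (rule ccontr)
    assume "\<not> distinct (cols M)"
    then obtain i j where ij: "i < c" "j < c" "i \<noteq> j" "cols M ! i = cols M ! j"
      using M by (auto simp: distinct_conv_nth)
    define v :: "'a vec" where "v = unit_vec c i - unit_vec c j"
    have v: "v \<in> carrier_vec c" unfolding v_def by simp
    have "M *\<^sub>v v = M *\<^sub>v unit_vec c i - M *\<^sub>v unit_vec c j"
      unfolding v_def using M by (simp add: mult_minus_distrib_mat_vec)
    also have "\<dots> = 0\<^sub>v n" using ij M by (simp add: mult_unit_vec_col)
    finally have "v = 0\<^sub>v c" using K v by blast
    then have "v $ i = 0" using ij(1) by simp
    then show False using ij unfolding v_def by simp
  qed
  have li: "lin_indpt (set (cols M))"
  proof (rule ccontr)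
    assume "\<not> lin_indpt (set (cols M))"
    then obtain v where "v \<in> carrier_vec c" "v \<noteq> 0\<^sub>v c" "M *\<^sub>v v = 0\<^sub>v n"
      using lin_depE[OF M _ dist] by blast
    with K show False by blast
  qed
  show ?thesis using lin_indpt_full_rank[OF M dist li] .
qed

lemma unit_vecs_full_rank:
  assumes M: "M \<in> carrier_mat n c" and U: "set (unit_vecs n) \<subseteq> set (cols M)"
  shows "rank M = n"
proof -
  have sub: "set (cols M) \<subseteq> carrier_vec n" using M cols_dim by blast
  have "span (set (cols M)) = carrier_vec n"
  proof
    show "span (set (cols M)) \<subseteq> carrier_vec n" using span_is_subset2[of "set (cols M)"] sub by simp
    show "carrier_vec n \<subseteq> span (set (cols M))"
      using span_is_monotone[OF U] span_unit_vecs_is_carrier by simp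
  qed
  then have "span_vs (set (cols M)) = V" by simp
  then show ?thesis unfolding rank_def using dim_is_n by simp
qed

end

lemma sum_lessThan_add: "sum f {..<a+(b::nat)} = sum f {..<a} + (\<Sum>i<b. f (a+i))"
  by (induct b) (simp_all add: ac_simps)

lemma sum_split: "(\<Sum>c<(m::nat)*n. f c) = (\<Sum>a<m. \<Sum>b<n. f (a*n+b))"
proof (induct m)
  case 0 then show ?case by simp
next
  case (Suc m)
  have "(\<Sum>c<Suc m*n. f c) = (\<Sum>c<m*n + n. f c)" by (simp add: add.commute)
  also have "\<dots> = (\<Sum>c<m*n. f c) + (\<Sum>b<n. f (m*n+b))" by (rule sum_lessThan_add)
  finally show ?case using Suc by simp
qed

lemma mult_zero_rows:
  "(A *\<^sub>v x = 0\<^sub>v (dim_row A)) \<longleftrightarrow> (\<forall>r\<in>set (rows A). r \<bullet> x = 0)"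
proof -
  have "(A *\<^sub>v x = 0\<^sub>v (dim_row A)) \<longleftrightarrow> (\<forall>i<dim_row A. row A i \<bullet> x = 0)"
    by (auto simp: vec_eq_iff)
  also have "\<dots> \<longleftrightarrow> (\<forall>r\<in>set (rows A). r \<bullet> x = 0)"
    by (auto simp: rows_def)
  finally show ?thesis .
qed

lemma vcat_mult_zero:
  assumes "\<forall>M\<in>set Ms. dim_col M = c"
  shows "(vcat c Ms *\<^sub>v x = 0\<^sub>v (dim_row (vcat c Ms))) \<longleftrightarrow> (\<forall>M\<in>set Ms. M *\<^sub>v x = 0\<^sub>v (dim_row M))"
proof -
  have sub: "set (concat (map rows Ms)) \<subseteq> carrier_vec c"
  proof (clarsimp)
    fix M v assume "M \<in> set Ms" "v \<in> set (rows M)"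
    then show "v \<in> carrier_vec c" using assms rows_carrier[of M] by auto
  qed
  have "rows (vcat c Ms) = concat (map rows Ms)"
    unfolding vcat_def using rows_mat_of_rows[OF sub] .
  then show ?thesis unfolding mult_zero_rows by auto
qed

definition blk :: "nat \<Rightarrow> real vec \<Rightarrow> nat \<Rightarrow> real vec" where
  "blk n y i = vec n (\<lambda>l. y $ (i*n+l))"

lemma kron_carrier: "kron P Q \<in> carrier_mat (dim_row P * dim_row Q) (dim_col P * dim_col Q)"
  unfolding kron_def by simp

lemma kron_index: "r < dim_row P * dim_row Q \<Longrightarrow> c < dim_col P * dim_col Q \<Longrightarrow>
  kron P Q $$ (r,c) = P $$ (r div dim_row Q, c div dim_col Q) * Q $$ (r mod dim_row Q, c mod dim_col Q)"
  unfolding kron_def by simp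

lemma div_mod_blk: "b < n \<Longrightarrow> (a*n+b) div n = a \<and> (a*n+b) mod n = (b::nat)"
  by simp

lemma kron_mult_vec:
  fixes P Q :: "real mat"
  assumes r: "r < dim_row P * dim_row Q" and y: "y \<in> carrier_vec (dim_col P * dim_col Q)"
  shows "(kron P Q *\<^sub>v y) $ r = (\<Sum>a<dim_col P. \<Sum>b<dim_col Q.
      P $$ (r div dim_row Q, a) * Q $$ (r mod dim_row Q, b) * y $ (a * dim_col Q + b))"
proof -
  let ?q = "dim_col Q"
  have "(kron P Q *\<^sub>v y) $ r = (\<Sum>c<dim_col P * ?q. kron P Q $$ (r,c) * y $ c)"
    using r y kron_carrier[of P Q] by (simp add: scalar_prod_def row_def atLeast0LessThan)
  also have "\<dots> = (\<Sum>c<dim_col P * ?q. P $$ (r div dim_row Q, c div ?q) * Q $$ (r mod dim_row Q, c mod ?q) * y $ c)"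
    using r by (intro sum.cong refl) (simp add: kron_index)
  also have "\<dots> = (\<Sum>a<dim_col P. \<Sum>b<?q. P $$ (r div dim_row Q, a) * Q $$ (r mod dim_row Q, b) * y $ (a * ?q + b))"
    unfolding sum_split by (intro sum.cong refl) simp
  finally show ?thesis .
qed

lemma blk_idx_lt: "i < m \<Longrightarrow> l < n \<Longrightarrow> i*n+l < m*(n::nat)"
proof -
  assume "i < m" "l < n"
  then have "i*n+l < i*n+n" by simp
  also have "\<dots> = Suc i * n" by simp
  also have "\<dots> \<le> m*n" using \<open>i<m\<close> by (intro mult_le_mono1) simp
  finally show ?thesis .
qed

lemma Atil_carrier: "A \<in> carrier_mat n n \<Longrightarrow> Atil m A \<in> carrier_mat (m*n) (m*n)"
  unfolding Atil_def using kron_carrier[of "1\<^sub>m m" A] by simp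

lemma Atil_mult_blk:
  assumes A: "A \<in> carrier_mat n n" and y: "y \<in> carrier_vec (m*n)" and i: "i < m"
  shows "blk n (Atil m A *\<^sub>v y) i = A *\<^sub>v blk n y i"
proof (rule eq_vecI)
  show "dim_vec (blk n (Atil m A *\<^sub>v y) i) = dim_vec (A *\<^sub>v blk n y i)" using A by (simp add: blk_def)
  fix l assume "l < dim_vec (A *\<^sub>v blk n y i)"
  then have l: "l < n" using A by simp
  have r: "i*n+l < m*n" using i l by (rule blk_idx_lt)
  have "(Atil m A *\<^sub>v y) $ (i*n+l) = (\<Sum>a<m. \<Sum>b<n. 1\<^sub>m m $$ (i, a) * A $$ (l, b) * y $ (a * n + b))"
    unfolding Atil_def using kron_mult_vec[of "i*n+l" "1\<^sub>m m" A y] r y A l by simp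
  also have "\<dots> = (\<Sum>a<m. if a = i then (\<Sum>b<n. A $$ (l, b) * y $ (a * n + b)) else 0)"
    using i by (intro sum.cong refl) (auto simp: one_mat_def)
  also have "\<dots> = (\<Sum>b<n. A $$ (l, b) * y $ (i * n + b))" using i by simp
  also have "\<dots> = (A *\<^sub>v blk n y i) $ l"
    using A l by (simp add: blk_def scalar_prod_def row_def atLeast0LessThan)
  finally show "blk n (Atil m A *\<^sub>v y) i $ l = (A *\<^sub>v blk n y i) $ l"
    using l by (simp add: blk_def)
qed


lemma blk_carrier[simp]: "blk n y i \<in> carrier_vec n" by (simp add: blk_def)

lemma Atil_pow_blk:
  assumes A: "A \<in> carrier_mat n n" and i: "i < m"
  shows "y \<in> carrier_vec (m*n) \<Longrightarrow> blk n ((Atil m A ^\<^sub>m k) *\<^sub>v y) i = (A ^\<^sub>m k) *\<^sub>v blk n y i"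
proof (induct k arbitrary: y)
  case 0
  have "dim_row (Atil m A) = m*n" using Atil_carrier[OF A, of m] by simp
  then show ?case using 0 A by (simp add: blk_def)
next
  case (Suc k)
  have At: "Atil m A \<in> carrier_mat (m*n) (m*n)" by (rule Atil_carrier[OF A])
  have Ak: "Atil m A ^\<^sub>m k \<in> carrier_mat (m*n) (m*n)" using At by (intro carrier_matI) auto
  have "(Atil m A ^\<^sub>m Suc k) *\<^sub>v y = (Atil m A ^\<^sub>m k) *\<^sub>v (Atil m A *\<^sub>v y)"
    by (simp only: pow_mat.simps) (rule assoc_mult_mat_vec[OF Ak At Suc.prems])
  then have "blk n ((Atil m A ^\<^sub>m Suc k) *\<^sub>v y) i = (A ^\<^sub>m k) *\<^sub>v blk n (Atil m A *\<^sub>v y) i"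
  proof -
    have "Atil m A *\<^sub>v y \<in> carrier_vec (m*n)" using At Suc.prems by (rule mult_mat_vec_carrier)
    from Suc.hyps[OF this] show ?thesis using \<open>(Atil m A ^\<^sub>m Suc k) *\<^sub>v y = _\<close> by simp
  qed
  also have "\<dots> = (A ^\<^sub>m k) *\<^sub>v (A *\<^sub>v blk n y i)" using Atil_mult_blk[OF A Suc.prems i] by simp
  also have "\<dots> = (A ^\<^sub>m Suc k) *\<^sub>v blk n y i"
  proof -
    have Ak': "A ^\<^sub>m k \<in> carrier_mat n n" using A by (intro carrier_matI) auto
    show ?thesis using assoc_mult_mat_vec[OF Ak' A blk_carrier[of n y i]] by simp
  qed
  finally show ?case .
qed


lemma blks_zero:
  assumes y: "y \<in> carrier_vec (m*n)" and z: "\<forall>i<m. blk n y i = 0\<^sub>v n"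
  shows "y = 0\<^sub>v (m*n)"
proof (rule eq_vecI)
  show "dim_vec y = dim_vec (0\<^sub>v (m*n))" using y by simp
  fix c assume "c < dim_vec (0\<^sub>v (m*n))"
  then have c: "c < m*n" by simp
  then have n: "n > 0" by (cases n) auto
  have i: "c div n < m" using c by (simp add: less_mult_imp_div_less)
  have l: "c mod n < n" using n by simp
  have "blk n y (c div n) $ (c mod n) = y $ (c div n * n + c mod n)" using l by (simp add: blk_def)
  also have "c div n * n + c mod n = c" by simp
  finally show "y $ c = 0\<^sub>v (m*n) $ c" using z i l c by simp
qed

lemma Bmat_carrier: "Bmat m n i \<in> carrier_mat (m*n) n"
  unfolding Bmat_def unit_col_def using kron_carrier[of "unit_col m i" "1\<^sub>m n"]
  by (simp add: unit_col_def)

lemma Bmat_col: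
  assumes i: "i < m" and l: "l < n"
  shows "col (Bmat m n i) l = unit_vec (m*n) (i*n+l)"
proof (rule eq_vecI)
  show "dim_vec (col (Bmat m n i) l) = dim_vec (unit_vec (m*n) (i*n+l))"
    using Bmat_carrier[of m n i] by simp
  fix r assume "r < dim_vec (unit_vec (m*n) (i*n+l))"
  then have r: "r < m*n" by simp
  then have n: "n > 0" by (cases n) auto
  have rd: "r div n < m" using r by (simp add: less_mult_imp_div_less)
  have "col (Bmat m n i) l $ r = Bmat m n i $$ (r, l)" using r l Bmat_carrier[of m n i] by simp
  also have "\<dots> = (if r div n = i then 1 else 0) * (if r mod n = l then 1 else 0)"
    unfolding Bmat_def using r l rd by (subst kron_index) (auto simp: unit_col_def)
  also have "\<dots> = (if r = i*n+l then 1 else 0)"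
  proof -
    have "(r = i*n+l) = (r div n = i \<and> r mod n = l)"
    proof
      assume "r = i*n+l" then show "r div n = i \<and> r mod n = l" using l by simp
    next
      assume "r div n = i \<and> r mod n = l"
      then show "r = i*n+l" using div_mult_mod_eq[of r n] by simp
    qed
    then show ?thesis by simp
  qed
  finally show "col (Bmat m n i) l $ r = unit_vec (m*n) (i*n+l) $ r" using r blk_idx_lt[OF i l] by simp
qed

lemma Bmat_T_mult:
  assumes i: "i < m" and y: "y \<in> carrier_vec (m*n)"
  shows "transpose_mat (Bmat m n i) *\<^sub>v y = blk n y i"
proof (rule eq_vecI)
  show "dim_vec (transpose_mat (Bmat m n i) *\<^sub>v y) = dim_vec (blk n y i)"
    using Bmat_carrier[of m n i] by (simp add: blk_def)
  fix l assume "l < dim_vec (blk n y i)"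
  then have l: "l < n" by (simp add: blk_def)
  have "(transpose_mat (Bmat m n i) *\<^sub>v y) $ l = col (Bmat m n i) l \<bullet> y"
    using l Bmat_carrier[of m n i] by simp
  also have "\<dots> = y $ (i*n+l)" using Bmat_col[OF i l] y blk_idx_lt[OF i l] by simp
  finally show "(transpose_mat (Bmat m n i) *\<^sub>v y) $ l = blk n y i $ l" using l by (simp add: blk_def)
qed

lemma if01_mult: "(if P then 1 else 0) * (x::real) = (if P then x else 0)" by simp

lemma inc_kron_carrier: "kron (inc_row m i j) (1\<^sub>m n) \<in> carrier_mat n (m*n)"
  using kron_carrier[of "inc_row m i j" "1\<^sub>m n"] by (simp add: inc_row_def)

lemma inc_kron_mult:
  assumes i: "i < m" and j: "j < m" and ij: "i \<noteq> j" and y: "y \<in> carrier_vec (m*n)" and l: "l < n"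
  shows "(kron (inc_row m i j) (1\<^sub>m n) *\<^sub>v y) $ l = y $ (j*n+l) - y $ (i*n+l)"
proof -
  have "(kron (inc_row m i j) (1\<^sub>m n) *\<^sub>v y) $ l =
     (\<Sum>a<m. \<Sum>b<n. inc_row m i j $$ (l div n, a) * 1\<^sub>m n $$ (l mod n, b) * y $ (a * n + b))"
    using kron_mult_vec[of l "inc_row m i j" "1\<^sub>m n" y] y l by (simp add: inc_row_def)
  also have "\<dots> = (\<Sum>a<m. ((if a = j then 1 else 0) - (if a = i then 1 else 0)) * y $ (a * n + l))"
  proof (intro sum.cong refl)
    fix a assume a: "a \<in> {..<m}"
    have "(\<Sum>b<n. inc_row m i j $$ (l div n, a) * 1\<^sub>m n $$ (l mod n, b) * y $ (a * n + b))
      = (\<Sum>b<n. if b = l then inc_row m i j $$ (0, a) * y $ (a * n + b) else 0)"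
      using l by (intro sum.cong refl) (auto simp: one_mat_def)
    also have "\<dots> = inc_row m i j $$ (0, a) * y $ (a * n + l)" using l by simp
    also have "\<dots> = ((if a = j then 1 else 0) - (if a = i then 1 else 0)) * y $ (a * n + l)"
      using a ij by (auto simp: inc_row_def)
    finally show "(\<Sum>b<n. inc_row m i j $$ (l div n, a) * 1\<^sub>m n $$ (l mod n, b) * y $ (a * n + b))
      = ((if a = j then 1 else 0) - (if a = i then 1 else 0)) * y $ (a * n + l)" .
  qed
  also have "\<dots> = y $ (j*n+l) - y $ (i*n+l)"
    using i j by (simp only: left_diff_distrib sum_subtractf if01_mult) simp
  finally show ?thesis .
qed

lemma Cmat_carrier:
  assumes "i < m" "C i \<in> carrier_mat (s i) n"
  shows "dim_col (Cmat m n C i j) = m*n"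
  using assms Bmat_carrier[of m n i] inc_kron_carrier[of m i j n] by (simp add: Cmat_def)

lemma channels_set:
  assumes "\<forall>i<m. Nb i \<subseteq> {0..<m}"
  shows "set (channels m Nb) = {(i,j). i < m \<and> j \<in> Nb i}"
proof -
  have "\<And>i. i < m \<Longrightarrow> finite (Nb i)" using assms finite_subset by blast
  then show ?thesis unfolding channels_def by auto
qed


lemma concat_cols_carrier:
  assumes "\<forall>M\<in>set Ms. dim_row M = r"
  shows "set (concat (map cols Ms)) \<subseteq> carrier_vec r"
proof
  fix v assume "v \<in> set (concat (map cols Ms))"
  then obtain M where "M \<in> set Ms" "v \<in> set (cols M)" by auto
  then show "v \<in> carrier_vec r" using assms cols_dim[of M] by auto
qed

lemma ctrl_part:
  assumes A: "A \<in> carrier_mat n n"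
    and Nb_self: "\<forall>i<m. i \<in> Nb i"
    and Nb_sub: "\<forall>i<m. Nb i \<subseteq> {0..<m}"
  shows "jointly_controllable m n Nb A"
proof -
  have At: "Atil m A \<in> carrier_mat (m*n) (m*n)" by (rule Atil_carrier[OF A])
  define Bh where "Bh = hcat (m*n) (map (\<lambda>(i, j). Bmat m n i) (channels m Nb))"
  define K where "K = hcat (m*n) (map (\<lambda>k. (Atil m A ^\<^sub>m k) * Bh) [0..<m*n])"
  have chs: "set (channels m Nb) = {(i,j). i < m \<and> j \<in> Nb i}" by (rule channels_set[OF Nb_sub])
  have subB: "set (concat (map cols (map (\<lambda>(i, j). Bmat m n i) (channels m Nb)))) \<subseteq> carrier_vec (m*n)"
  proof (rule concat_cols_carrier, clarsimp)
    fix i j show "dim_row (Bmat m n i) = m*n" using Bmat_carrier[of m n i] by simp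
  qed
  have colsB: "cols Bh = concat (map cols (map (\<lambda>(i, j). Bmat m n i) (channels m Nb)))"
    unfolding Bh_def hcat_def using cols_mat_of_cols[OF subB] .
  have Bh: "Bh \<in> carrier_mat (m*n) (dim_col Bh)" unfolding Bh_def hcat_def by simp
  have subK: "set (concat (map cols (map (\<lambda>k. (Atil m A ^\<^sub>m k) * Bh) [0..<m*n]))) \<subseteq> carrier_vec (m*n)"
    by (rule concat_cols_carrier) (use At in auto)
  have colsK: "cols K = concat (map cols (map (\<lambda>k. (Atil m A ^\<^sub>m k) * Bh) [0..<m*n]))"
    unfolding K_def hcat_def using cols_mat_of_cols[OF subK] .
  have U: "set (unit_vecs (m*n)) \<subseteq> set (cols K)"
  proof
    fix v :: "real vec" assume "v \<in> set (unit_vecs (m*n))"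
    then obtain c where c: "c < m*n" and v: "v = unit_vec (m*n) c" by (auto simp: unit_vecs_def)
    then have n: "n > 0" by (cases n) auto
    have i: "c div n < m" using c by (simp add: less_mult_imp_div_less)
    have l: "c mod n < n" using n by simp
    have cc: "c div n * n + c mod n = c" by simp
    have "v = col (Bmat m n (c div n)) (c mod n)" using Bmat_col[OF i l] cc v by simp
    also have "\<dots> \<in> set (cols (Bmat m n (c div n)))" using l Bmat_carrier[of m n "c div n"]
      by (auto simp: cols_def)
    finally have v1: "v \<in> set (cols (Bmat m n (c div n)))" .
    have "(c div n, c div n) \<in> set (channels m Nb)" using i Nb_self chs by simp
    then have "Bmat m n (c div n) \<in> set (map (\<lambda>(i, j). Bmat m n i) (channels m Nb))"
      by (metis (no_types, lifting) case_prod_conv image_eqI set_map)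
    then have "v \<in> set (cols Bh)" using v1 unfolding colsB set_concat set_map by blast
    moreover have "(Atil m A ^\<^sub>m 0) * Bh = Bh" using At Bh by simp
    moreover have "(Atil m A ^\<^sub>m 0) * Bh \<in> set (map (\<lambda>k. (Atil m A ^\<^sub>m k) * Bh) [0..<m*n])"
    proof -
      have "(0::nat) < m*n" using c by linarith
      then have "0 \<in> set [0..<m*n]" by simp
      then show ?thesis unfolding set_map by (rule imageI)
    qed
    ultimately show "v \<in> set (cols K)" unfolding colsK set_concat set_map
      by (metis (no_types, lifting) UN_iff image_eqI)
  qed
  have Kc: "K \<in> carrier_mat (m*n) (dim_col K)" unfolding K_def hcat_def by simp
  have "vec_space.rank (m*n) K = m*n" by (rule vec_space.unit_vecs_full_rank[OF Kc U])
  moreover have dr: "dim_row (Atil m A) = m*n" using At by simp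
  ultimately show ?thesis
    unfolding jointly_controllable_def controllable_def Let_def dr Bh_def[symmetric] K_def[symmetric] by blast
qed


lemma obs_part:
  fixes n m :: nat and A :: "real mat" and C :: "nat \<Rightarrow> real mat"
    and s :: "nat \<Rightarrow> nat" and Nb :: "nat \<Rightarrow> nat set"
  assumes A: "A \<in> carrier_mat n n"
    and Cdim: "\<forall>i<m. C i \<in> carrier_mat (s i) n"
    and Nb_self: "\<forall>i<m. i \<in> Nb i"
    and Nb_sub: "\<forall>i<m. Nb i \<subseteq> {0..<m}"
    and obs: "observable (vcat n (map C [0..<m])) A"
    and sc: "strongly_connected_nbr m Nb"
  shows "jointly_observable m n Nb C A"
proof -
  have At: "Atil m A \<in> carrier_mat (m*n) (m*n)" by (rule Atil_carrier[OF A])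
  have chs: "set (channels m Nb) = {(i,j). i < m \<and> j \<in> Nb i}" by (rule channels_set[OF Nb_sub])
  define Cb where "Cb = vcat (m*n) (map (\<lambda>(i, j). Cmat m n C i j) (channels m Nb))"
  define Ob where "Ob = vcat (m*n) (map (\<lambda>k. Cb * (Atil m A ^\<^sub>m k)) [0..<m*n])"
  have Atk: "\<And>k. Atil m A ^\<^sub>m k \<in> carrier_mat (m*n) (m*n)" using At by (intro carrier_matI) auto
  have Cb: "Cb \<in> carrier_mat (dim_row Cb) (m*n)" unfolding Cb_def vcat_def by simp
  have Obc: "Ob \<in> carrier_mat (dim_row Ob) (m*n)" unfolding Ob_def vcat_def by simp
  have Cmat_cols: "\<forall>M\<in>set (map (\<lambda>(i, j). Cmat m n C i j) (channels m Nb)). dim_col M = m*n"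
    using chs Cdim Cmat_carrier[of _ m C s n] by auto
  have ker: "x = 0\<^sub>v (m*n)" if x: "x \<in> carrier_vec (m*n)" and Ox: "Ob *\<^sub>v x = 0\<^sub>v (dim_row Ob)" for x
  proof (cases "m*n = 0")
    case True then show ?thesis using x by (intro eq_vecI) auto
  next
    case False
    then have mpos: "m > 0" and npos: "n > 0" by auto
    have dcO: "\<forall>M\<in>set (map (\<lambda>k. Cb * (Atil m A ^\<^sub>m k)) [0..<m*n]). dim_col M = m*n"
      using At by simp
    have allO: "\<forall>M\<in>set (map (\<lambda>k. Cb * (Atil m A ^\<^sub>m k)) [0..<m*n]). M *\<^sub>v x = 0\<^sub>v (dim_row M)"
      using vcat_mult_zero[OF dcO, of x] Ox unfolding Ob_def by blast
    have Z1: "Cb *\<^sub>v (Atil m A ^\<^sub>m k *\<^sub>v x) = 0\<^sub>v (dim_row Cb)" if "k < m*n" for k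
    proof -
      have "Cb * (Atil m A ^\<^sub>m k) \<in> set (map (\<lambda>k. Cb * (Atil m A ^\<^sub>m k)) [0..<m*n])"
        using that by simp
      then have "(Cb * (Atil m A ^\<^sub>m k)) *\<^sub>v x = 0\<^sub>v (dim_row (Cb * (Atil m A ^\<^sub>m k)))"
        using allO by blast
      then show ?thesis using assoc_mult_mat_vec[OF Cb Atk[of k] x] by simp
    qed
    have Z2: "Cmat m n C i j *\<^sub>v (Atil m A ^\<^sub>m k *\<^sub>v x) = 0\<^sub>v (dim_row (Cmat m n C i j))"
      if "k < m*n" "i < m" "j \<in> Nb i" for k i j
    proof -
      have "(i,j) \<in> set (channels m Nb)" using chs that by simp
      then have mem: "Cmat m n C i j \<in> set (map (\<lambda>(i, j). Cmat m n C i j) (channels m Nb))"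
        by force
      have "\<forall>M\<in>set (map (\<lambda>(i, j). Cmat m n C i j) (channels m Nb)).
          M *\<^sub>v (Atil m A ^\<^sub>m k *\<^sub>v x) = 0\<^sub>v (dim_row M)"
        using Z1[OF that(1)] vcat_mult_zero[OF Cmat_cols, of "Atil m A ^\<^sub>m k *\<^sub>v x"]
        unfolding Cb_def by simp
      then show ?thesis using mem by blast
    qed
    have x0: "Atil m A ^\<^sub>m 0 *\<^sub>v x = x" using x At by simp
    have F1: "blk n x j = blk n x i" if "i < m" "j \<in> Nb i" "j \<noteq> i" for i j
    proof (rule eq_vecI)
      have "j \<in> {0..<m}" using Nb_sub that(1,2) by blast
      then have j: "j < m" by simp
      fix l assume "l < dim_vec (blk n x i)"
      then have l: "l < n" by (simp add: blk_def)
      have "Cmat m n C i j *\<^sub>v x = 0\<^sub>v (dim_row (Cmat m n C i j))"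
        using Z2[of 0 i j] that False x0 by simp
      moreover have "Cmat m n C i j = kron (inc_row m i j) (1\<^sub>m n)" using that by (simp add: Cmat_def)
      ultimately have "(kron (inc_row m i j) (1\<^sub>m n) *\<^sub>v x) $ l = 0"
        using l inc_kron_carrier[of m i j n] by simp
      then show "blk n x j $ l = blk n x i $ l"
        using inc_kron_mult[OF that(1) j _ x l] that l by (simp add: blk_def)
    qed (simp add: blk_def)
    have F2: "C i *\<^sub>v (A ^\<^sub>m k *\<^sub>v blk n x i) = 0\<^sub>v (s i)" if "i < m" "k < m*n" for i k
    proof -
      have Ci: "C i \<in> carrier_mat (s i) n" using Cdim that by auto
      have y: "Atil m A ^\<^sub>m k *\<^sub>v x \<in> carrier_vec (m*n)" using Atk x by (rule mult_mat_vec_carrier)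
      have BT: "transpose_mat (Bmat m n i) \<in> carrier_mat n (m*n)" using Bmat_carrier[of m n i] by simp
      have "Cmat m n C i i *\<^sub>v (Atil m A ^\<^sub>m k *\<^sub>v x) = C i *\<^sub>v (transpose_mat (Bmat m n i) *\<^sub>v (Atil m A ^\<^sub>m k *\<^sub>v x))"
        unfolding Cmat_def using assoc_mult_mat_vec[OF Ci BT y] by simp
      also have "\<dots> = C i *\<^sub>v (A ^\<^sub>m k *\<^sub>v blk n x i)"
        using Bmat_T_mult[OF that(1) y] Atil_pow_blk[OF A that(1) x] by simp
      finally show ?thesis using Z2[OF that(2) that(1), of i] Nb_self that Ci by (simp add: Cmat_def)
    qed
    have conn: "(a, b) \<in> (nbr_arcs m Nb)\<^sup>* \<Longrightarrow> blk n x a = blk n x b" for a b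
    proof (induct rule: rtrancl_induct)
      case base then show ?case by simp
    next
      case (step b c)
      then have "c < m" "b \<in> Nb c" "b \<noteq> c" by (auto simp: nbr_arcs_def)
      then show ?case using step F1 by simp
    qed
    define v where "v = blk n x 0"
    have allv: "blk n x i = v" if "i < m" for i
    proof -
      have "(i, 0) \<in> (nbr_arcs m Nb)\<^sup>*" using sc that mpos unfolding strongly_connected_nbr_def by simp
      then show ?thesis using conn unfolding v_def by simp
    qed
    define Cv where "Cv = vcat n (map C [0..<m])"
    define Obs where "Obs = vcat n (map (\<lambda>k. Cv * (A ^\<^sub>m k)) [0..<n])"
    have Cv: "Cv \<in> carrier_mat (dim_row Cv) n" unfolding Cv_def vcat_def by simp
    have Ak: "\<And>k. A ^\<^sub>m k \<in> carrier_mat n n" using A by (intro carrier_matI) auto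
    have v: "v \<in> carrier_vec n" unfolding v_def by simp
    have "Cv *\<^sub>v (A ^\<^sub>m k *\<^sub>v v) = 0\<^sub>v (dim_row Cv)" if "k < n" for k
    proof -
      have "k < m*n" using that mpos by (cases m) auto
      then have "\<forall>M\<in>set (map C [0..<m]). M *\<^sub>v (A ^\<^sub>m k *\<^sub>v v) = 0\<^sub>v (dim_row M)"
        using F2 allv Cdim by auto
      moreover have dc: "\<forall>M\<in>set (map C [0..<m]). dim_col M = n" using Cdim by auto
      ultimately show ?thesis unfolding Cv_def using vcat_mult_zero[OF dc, of "A ^\<^sub>m k *\<^sub>v v"] by simp
    qed
    note Hk = this
    have allS: "\<forall>M\<in>set (map (\<lambda>k. Cv * (A ^\<^sub>m k)) [0..<n]). M *\<^sub>v v = 0\<^sub>v (dim_row M)"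
    proof
      fix M assume "M \<in> set (map (\<lambda>k. Cv * (A ^\<^sub>m k)) [0..<n])"
      then obtain k where k: "k < n" and M: "M = Cv * (A ^\<^sub>m k)" by auto
      show "M *\<^sub>v v = 0\<^sub>v (dim_row M)" unfolding M
        using assoc_mult_mat_vec[OF Cv Ak[of k] v] Hk[OF k] by simp
    qed
    have dcS: "\<forall>M\<in>set (map (\<lambda>k. Cv * (A ^\<^sub>m k)) [0..<n]). dim_col M = n"
      using A by simp
    have "Obs *\<^sub>v v = 0\<^sub>v (dim_row Obs)"
      using vcat_mult_zero[OF dcS, of v] allS unfolding Obs_def by blast
    moreover have "vec_space.rank (dim_row Obs) Obs = n"
      using obs A unfolding observable_def Let_def Obs_def Cv_def by simp
    moreover have "Obs \<in> carrier_mat (dim_row Obs) n" unfolding Obs_def vcat_def by simp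
    ultimately have "v = 0\<^sub>v n" using vec_space.rank_full_kernel v by blast
    then show ?thesis using blks_zero[OF x] allv by simp
  qed
  have "vec_space.rank (dim_row Ob) Ob = m*n"
    by (rule vec_space.kernel_full_rank[OF Obc ker])
  then show ?thesis
    unfolding jointly_observable_def observable_def Let_def Ob_def Cb_def using At by simp
qed

theorem lemma4:
  fixes n m :: nat and A :: "real mat" and C :: "nat \<Rightarrow> real mat"
    and s :: "nat \<Rightarrow> nat" and Nb :: "nat \<Rightarrow> nat set"
  assumes A: "A \<in> carrier_mat n n"
    and Cdim: "\<forall>i<m. C i \<in> carrier_mat (s i) n"
    and Nb_self: "\<forall>i<m. i \<in> Nb i"
    and Nb_sub: "\<forall>i<m. Nb i \<subseteq> {0..<m}"
    and obs: "observable (vcat n (map C [0..<m])) A"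
    and sc: "strongly_connected_nbr m Nb"
  shows "jointly_controllable m n Nb A \<and> jointly_observable m n Nb C A"
  using ctrl_part[OF A Nb_self Nb_sub] obs_part[OF A Cdim Nb_self Nb_sub obs sc] by simp

end
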